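(* Let $s\in(0,1)$ and suppose the jump kernels $j_2^{(n)}$ satisfy the upper bound with this $s$. If $u\in C^{1/2}([0,1])$, then $\widetilde{\mathcal{E}}_2^{(\infty)}(u)=\mathcal{E}_2^{(\infty)}(u)$.
   Context: Index graph: vertices $\mathbb{N}$; vertex $i$ has edges $e_{i,2i-2}$ to $2i-2$ (only if $i\ge2$), $e_{i,2i-1},e'_{i,2i-1}$ to $2i-1$, $e_{i,2i}$ to $2i$, weights $r_e>0$ with $r_{e_{i,2i-1}}=r_{e'_{i,2i-1}}$. For $e$ from $i$ to $j$, $\phi_e(x)=\frac{j}{2i}x+s_e$, $s_e=0$ for $e\in\{e_{i,2i-1},e_{i,2i}\}$, $s_e=\frac1{2i}$ for $e\in\{e_{i,2i-2},e'_{i,2i-1}\}$. $E_2^{(n)}$: paths $\sigma=e_1\cdots e_n$ of length $n$ from vertex $2$; $\phi_\sigma=\phi_{e_1}\circ\cdots\circ\phi_{e_n}$, $\delta_\sigma=r_{e_1}\cdots r_{e_n}$. $V_{2-}^{(n)}=\{k/2^{n+1}\}_{k=0}^{2^n-1}$, $V_{2+}^{(n)}=\{1-k/2^{n+1}\}_{k=0}^{2^n-1}$, $V_2^{(n)}=V_{2-}^{(n)}\cup V_{2+}^{(n)}$. The wires $\{\phi_\sigma(0),\phi_\sigma(1)\}$, $\sigma\in E_2^{(n)}$, are all pairs $\{x,y\}$ with $x\in V_{2-}^{(n)}$, $y\in V_{2+}^{(n)}$, each with a unique path $\sigma^{(n)}_{x,y}$. $U_2^{(n)}(x)=[x,x+2^{-n-1})$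 for $x<\frac12$, $(x-2^{-n-1},x]$ for $x>\frac12$; $\mu_2^{(n)}(x)=2^{-n-1}$. Kernel $j_2^{(n)}(x,y)=(\delta_{\sigma^{(n)}_{x,y}}\mu_2^{(n)}(x)\mu_2^{(n)}(y))^{-1}$ on wires, $0$ otherwise. $\mathcal{E}_2^{(n)}(u)=\sum_{x,y\in V_2^{(n)}}(u(x)-u(y))^2j_2^{(n)}(x,y)\mu_2^{(n)}(x)\mu_2^{(n)}(y)$. Upper bound: there is $\Lambda_2>0$ with $0<j_2^{(n)}(x,y)\le\Lambda_2|x-y|^{-1-2s}$ for all $n\ge0$ and wires $\{x,y\}$. $\mathcal{E}_2^{(\infty)}(u)=\lim_n\mathcal{E}_2^{(n)}(u|_{V_2^{(n)}})$; $\operatorname{Avg}_2^{(n)}u(\bar x)=\frac1{|U_2^{(n)}(\bar x)|}\int_{U_2^{(n)}(\bar x)}u\,dx$; $\widetilde{\mathcal{E}}_2^{(\infty)}(u)=\lim_n\mathcal{E}_2^{(n)}(\operatorname{Avg}_2^{(n)}u)$. *)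

theory Defs
  imports "HOL-Analysis.Analysis"
begin

text \<open>Edges of the index graph: (i, k) with source vertex i and kind k:
  k = 0: e_{i,2i-2} (only i \<ge> 2), k = 1: e_{i,2i-1}, k = 2: e'_{i,2i-1}, k = 3: e_{i,2i}.\<close>
type_synonym edge = "nat \<times> nat"

definition valid_edge :: "edge \<Rightarrow> bool" where
  "valid_edge e = (fst e \<ge> 1 \<and> snd e \<le> 3 \<and> (snd e = 0 \<longrightarrow> fst e \<ge> 2))"

definition esrc :: "edge \<Rightarrow> nat" where "esrc e = fst e"

definition etgt :: "edge \<Rightarrow> nat" where
  "etgt e = (if snd e = 0 then 2 * fst e - 2
             else if snd e = 1 \<or> snd e = 2 then 2 * fst e - 1
             else 2 * fst e)"

definition eshift :: "edge \<Rightarrow> real" where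
  "eshift e = (if snd e = 0 \<or> snd e = 2 then 1 / (2 * real (fst e)) else 0)"

definition phi_e :: "edge \<Rightarrow> real \<Rightarrow> real" where
  "phi_e e x = real (etgt e) / (2 * real (esrc e)) * x + eshift e"

fun is_path :: "nat \<Rightarrow> edge list \<Rightarrow> bool" where
  "is_path v [] = True"
| "is_path v (e # es) = (valid_edge e \<and> esrc e = v \<and> is_path (etgt e) es)"

definition E2 :: "nat \<Rightarrow> edge list set" where
  "E2 n = {\<sigma>. length \<sigma> = n \<and> is_path 2 \<sigma>}"

definition phi_path :: "edge list \<Rightarrow> real \<Rightarrow> real" where
  "phi_path \<sigma> = foldr (\<lambda>e f. phi_e e \<circ> f) \<sigma> id"

definition delta :: "(edge \<Rightarrow> real) \<Rightarrow> edge list \<Rightarrow> real" where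
  "delta r \<sigma> = prod_list (map r \<sigma>)"

definition V2minus :: "nat \<Rightarrow> real set" where
  "V2minus n = {real k / 2 ^ (n + 1) | k. k < 2 ^ n}"

definition V2plus :: "nat \<Rightarrow> real set" where
  "V2plus n = {1 - real k / 2 ^ (n + 1) | k. k < 2 ^ n}"

definition V2 :: "nat \<Rightarrow> real set" where
  "V2 n = V2minus n \<union> V2plus n"

definition U2 :: "nat \<Rightarrow> real \<Rightarrow> real set" where
  "U2 n x = (if x < 1 / 2 then {x ..< x + 1 / 2 ^ (n + 1)} else {x - 1 / 2 ^ (n + 1) <.. x})"

definition mu2 :: "nat \<Rightarrow> real \<Rightarrow> real" where
  "mu2 n x = 1 / 2 ^ (n + 1)"

definition is_wire :: "nat \<Rightarrow> real \<Rightarrow> real \<Rightarrow> bool" where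
  "is_wire n x y = (\<exists>\<sigma>\<in>E2 n. {phi_path \<sigma> 0, phi_path \<sigma> 1} = {x, y})"

definition wire_path :: "nat \<Rightarrow> real \<Rightarrow> real \<Rightarrow> edge list" where
  "wire_path n x y = (THE \<sigma>. \<sigma> \<in> E2 n \<and> {phi_path \<sigma> 0, phi_path \<sigma> 1} = {x, y})"

definition j2 :: "(edge \<Rightarrow> real) \<Rightarrow> nat \<Rightarrow> real \<Rightarrow> real \<Rightarrow> real" where
  "j2 r n x y = (if is_wire n x y
                 then 1 / (delta r (wire_path n x y) * mu2 n x * mu2 n y) else 0)"

definition energy2 :: "(edge \<Rightarrow> real) \<Rightarrow> nat \<Rightarrow> (real \<Rightarrow> real) \<Rightarrow> real" where
  "energy2 r n v = (\<Sum>x\<in>V2 n. \<Sum>y\<in>V2 n. (v x - v y)\<^sup>2 * j2 r n x y * mu2 n x * mu2 n y)"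

definition avg2 :: "nat \<Rightarrow> (real \<Rightarrow> real) \<Rightarrow> real \<Rightarrow> real" where
  "avg2 n u x = integral (U2 n x) u / measure lebesgue (U2 n x)"

definition upper_bound :: "(edge \<Rightarrow> real) \<Rightarrow> real \<Rightarrow> bool" where
  "upper_bound r s = (\<exists>\<Lambda>>0. \<forall>n x y. is_wire n x y \<longrightarrow>
       0 < j2 r n x y \<and> j2 r n x y \<le> \<Lambda> * \<bar>x - y\<bar> powr (- 1 - 2 * s))"

definition holder_half_01 :: "(real \<Rightarrow> real) \<Rightarrow> bool" where
  "holder_half_01 u = (\<exists>C. \<forall>x\<in>{0..1}. \<forall>y\<in>{0..1}. \<bar>u x - u y\<bar> \<le> C * \<bar>x - y\<bar> powr (1 / 2))"

end

theory Submission
  imports Defs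
begin

lemma phi_path_Cons: "phi_path (e # \<sigma>) = phi_e e \<circ> phi_path \<sigma>"
  by (simp add: phi_path_def)

lemma path_bound:
  "is_path i \<sigma> \<Longrightarrow> i \<ge> 1 \<Longrightarrow> phi_path \<sigma> 0 < 1 / real i \<and> 1 - 1 / real i < phi_path \<sigma> 1"
proof (induction \<sigma> arbitrary: i)
  case Nil
  then show ?case by (simp add: phi_path_def)
next
  case (Cons e \<sigma>)
  define j where "j = etgt e"
  have ve: "valid_edge e" "esrc e = i" "is_path j \<sigma>" using Cons.prems by (auto simp: j_def)
  have j1: "j \<ge> 1" using ve(1) unfolding j_def etgt_def valid_edge_def by auto
  have j2: "real j \<le> 2 * real i" using ve unfolding j_def etgt_def valid_edge_def esrc_def by auto
  from Cons.IH[OF ve(3) j1] have a: "phi_path \<sigma> 0 < 1 / real j" and b: "1 - 1 / real j < phi_path \<sigma> 1" by auto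
  have jp: "real j > 0" using j1 by simp
  have ip: "real i > 0" using Cons.prems by simp
  have k: "real j / (2 * real i) * phi_path \<sigma> 0 < 1 / (2 * real i)"
  proof -
    have "real j / (2 * real i) * phi_path \<sigma> 0 < real j / (2 * real i) * (1 / real j)"
      using a jp ip by (intro mult_strict_left_mono) auto
    then show ?thesis using jp by simp
  qed
  have k2: "real j / (2 * real i) * (1 - phi_path \<sigma> 1) < 1 / (2 * real i)"
  proof -
    have "real j / (2 * real i) * (1 - phi_path \<sigma> 1) < real j / (2 * real i) * (1 / real j)"
      using b jp ip by (intro mult_strict_left_mono) auto
    then show ?thesis using jp by simp
  qed
  have sh: "eshift e \<le> 1 / (2 * real i)" "eshift e \<ge> 0" using ve(2) by (auto simp: eshift_def esrc_def)
  have c: "real (2 * i) - real j - 2 * real i * eshift e \<le> 1"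
    using ve(1,2) ip unfolding j_def etgt_def valid_edge_def esrc_def eshift_def by auto
  have e0: "phi_path (e # \<sigma>) 0 = real j / (2 * real i) * phi_path \<sigma> 0 + eshift e"
    and e1: "phi_path (e # \<sigma>) 1 = real j / (2 * real i) * phi_path \<sigma> 1 + eshift e"
    using ve(2) by (auto simp: phi_path_Cons phi_e_def j_def)
  have "phi_path (e # \<sigma>) 0 < 1 / real i" using e0 k sh ip by (simp add: field_simps)
  moreover have "1 - 1 / real i < phi_path (e # \<sigma>) 1"
  proof -
    have "1 - phi_path (e # \<sigma>) 1 = (real (2 * i) - real j - 2 * real i * eshift e) / (2 * real i)
           + real j / (2 * real i) * (1 - phi_path \<sigma> 1)"
      unfolding e1 using ip by (simp add: field_simps)
    also have "\<dots> < 1 / (2 * real i) + 1 / (2 * real i)"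
      using c k2 ip by (intro add_le_less_mono) (auto simp: divide_right_mono)
    finally show ?thesis by simp
  qed
  ultimately show ?case by simp
qed

lemma wire_halves:
  assumes "is_wire n x y"
  shows "(x < 1/2 \<and> 1/2 < y) \<or> (y < 1/2 \<and> 1/2 < x)"
proof -
  obtain \<sigma> where "\<sigma> \<in> E2 n" and eq: "{phi_path \<sigma> 0, phi_path \<sigma> 1} = {x, y}"
    using assms by (auto simp: is_wire_def)
  then have "is_path 2 \<sigma>" by (simp add: E2_def)
  from path_bound[OF this] have "phi_path \<sigma> 0 < 1/2" "1/2 < phi_path \<sigma> 1" by auto
  with eq show ?thesis by (auto simp: doubleton_eq_iff)
qed

lemma V2minus_img: "V2minus n = (\<lambda>k. real k / 2 ^ (n + 1)) ` {..<2 ^ n}"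
  by (auto simp: V2minus_def)

lemma V2plus_img: "V2plus n = (\<lambda>k. 1 - real k / 2 ^ (n + 1)) ` {..<2 ^ n}"
  by (auto simp: V2plus_def)

lemma finite_V2: "finite (V2 n)"
  by (simp add: V2_def V2minus_img V2plus_img)

lemma V2minus_props:
  assumes "k < (2::nat) ^ n"
  shows "real k / 2 ^ (n + 1) + 1 / 2 ^ (n + 1) \<le> 1 / 2"
    and "1 / 2 - real k / 2 ^ (n + 1) = real (2 ^ n - k) * (1 / 2 ^ (n + 1))"
proof -
  have "real k + 1 \<le> 2 ^ n" using assms
    by (metis Suc_leI of_nat_1 of_nat_add of_nat_le_iff of_nat_numeral of_nat_power add.commute plus_1_eq_Suc)
  then have "(real k + 1) / 2 ^ (n + 1) \<le> 2 ^ n / 2 ^ (n + 1)"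
    by (intro divide_right_mono) auto
  then show "real k / 2 ^ (n + 1) + 1 / 2 ^ (n + 1) \<le> 1 / 2"
    by (simp add: add_divide_distrib)
  have "real (2 ^ n - k) = 2 ^ n - real k" using assms by (simp add: of_nat_diff)
  then show "1 / 2 - real k / 2 ^ (n + 1) = real (2 ^ n - k) * (1 / 2 ^ (n + 1))"
    by (simp add: field_simps)
qed

lemma V2_cases:
  assumes "x \<in> V2 n"
  defines "h \<equiv> 1 / 2 ^ (n + 1) :: real"
  shows "(0 \<le> x \<and> x + h \<le> 1/2 \<and> U2 n x = {x..<x+h}) \<or> (1/2 \<le> x - h \<and> x \<le> 1 \<and> U2 n x = {x-h<..x})"
proof -
  have hp: "h > 0" by (simp add: h_def)
  from assms(1) consider (m) k where "k < (2::nat)^n" "x = real k / 2 ^ (n + 1)"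
    | (p) k where "k < (2::nat)^n" "x = 1 - real k / 2 ^ (n + 1)"
    by (auto simp: V2_def V2minus_def V2plus_def)
  then show ?thesis
  proof cases
    case m
    from V2minus_props(1)[OF m(1)] have "x + h \<le> 1/2" by (simp add: m(2) h_def)
    then have "x < 1/2" using hp by linarith
    then show ?thesis using \<open>x + h \<le> 1/2\<close> m by (auto simp: U2_def h_def)
  next
    case p
    from V2minus_props(1)[OF p(1)] have "1/2 \<le> x - h" by (simp add: p(2) h_def)
    then have "\<not> x < 1/2" using hp by linarith
    moreover have "x \<le> 1" using p by simp
    ultimately show ?thesis using \<open>1/2 \<le> x - h\<close> by (auto simp: U2_def h_def)
  qed
qed

lemma int_Ico: "a \<le> b \<Longrightarrow> integral {a..<b} f = integral {a..b} (f::real\<Rightarrow>real)"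
  by (rule integral_spike_set) (auto intro: negligible_subset[of "{b}"])

lemma int_Ioc: "a \<le> b \<Longrightarrow> integral {a<..b} f = integral {a..b} (f::real\<Rightarrow>real)"
  by (rule integral_spike_set) (auto intro: negligible_subset[of "{a}"])

lemma meas_Ico: "a \<le> b \<Longrightarrow> measure lebesgue {a..<b} = b - (a::real)"
  by (subst measure_completion) auto

lemma meas_Ioc: "a \<le> b \<Longrightarrow> measure lebesgue {a<..b} = b - (a::real)"
  by (subst measure_completion) auto

lemma avg_aux:
  fixes a b c K :: real and f :: "real \<Rightarrow> real"
  assumes ab: "a < b" and fc: "continuous_on {a..b} f" and fb: "\<And>t. t \<in> {a..b} \<Longrightarrow> \<bar>f t - c\<bar> \<le> K"
    and S: "S = {a..<b} \<or> S = {a<..b}"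
  shows "\<bar>integral S f / measure lebesgue S - c\<bar> \<le> K"
proof -
  have i: "integral S f = integral {a..b} f"
    using S ab int_Ico int_Ioc by auto
  have ms: "measure lebesgue S = b - a" using S ab meas_Ico meas_Ioc by auto
  have fi: "f integrable_on {a..b}" using fc by (rule integrable_continuous_real)
  have d: "integral {a..b} (\<lambda>t. f t - c) = integral {a..b} f - c * (b - a)"
    using ab by (simp add: integral_diff[OF fi integrable_const_ivl])
  have "norm (integral {a..b} (\<lambda>t. f t - c)) \<le> K * (b - a)"
  proof (rule integral_bound)
    show "a \<le> b" using ab by simp
    show "continuous_on {a..b} (\<lambda>t. f t - c)" by (intro continuous_on_diff fc continuous_on_const)
    show "\<And>t. t \<in> {a..b} \<Longrightarrow> norm (f t - c) \<le> K" using fb by simp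
  qed
  then have X: "\<bar>integral S f - c * (b - a)\<bar> \<le> K * (b - a)" using i d by simp
  have bp: "b - a > 0" using ab by simp
  have "integral S f / measure lebesgue S - c = (integral S f - c * (b - a)) / (b - a)"
    unfolding ms using bp by (simp add: field_simps)
  also have "\<bar>\<dots>\<bar> = \<bar>integral S f - c * (b - a)\<bar> / (b - a)" using bp by simp
  also have "\<dots> \<le> K" using X bp by (simp add: pos_divide_le_eq)
  finally show ?thesis .
qed

lemma holder_cont:
  assumes C: "C \<ge> 0" and H: "\<forall>x\<in>{0..1}. \<forall>y\<in>{0..1}. \<bar>u x - u y\<bar> \<le> C * sqrt \<bar>x - y\<bar>"
  shows "continuous_on {0..1} u"
  unfolding continuous_on_iff
proof (intro ballI allI impI)
  fix x e :: real assume x: "x \<in> {0..1}" and e: "e > 0"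
  show "\<exists>d>0. \<forall>x'\<in>{0..1}. dist x' x < d \<longrightarrow> dist (u x') (u x) < e"
  proof (intro exI conjI ballI impI)
    show "(e / (C + 1))\<^sup>2 > 0" using e C by simp
    fix x' assume x': "x' \<in> {0..1}" and d: "dist x' x < (e / (C + 1))\<^sup>2"
    have "sqrt \<bar>x' - x\<bar> < e / (C + 1)"
    proof -
      have "sqrt \<bar>x' - x\<bar> < sqrt ((e / (C + 1))\<^sup>2)"
        using d by (simp add: dist_real_def del: real_sqrt_abs)
      also have "\<dots> = e / (C + 1)" using e C by simp
      finally show ?thesis .
    qed
    then have "C * sqrt \<bar>x' - x\<bar> \<le> C * (e / (C + 1))" using C by (intro mult_left_mono) auto
    also have "\<dots> < e" using C e by (simp add: field_simps)
    finally have "C * sqrt \<bar>x' - x\<bar> < e" .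
    moreover have "\<bar>u x' - u x\<bar> \<le> C * sqrt \<bar>x' - x\<bar>" using H x x' by blast
    ultimately show "dist (u x') (u x) < e" by (simp add: dist_real_def)
  qed
qed
lemma sq_diff_bound:
  fixes ax ay ux uy C h d :: real
  assumes C: "C \<ge> 0" and h: "0 \<le> h" "h \<le> d" and a1: "\<bar>ax - ux\<bar> \<le> C * sqrt h"
    and a2: "\<bar>ay - uy\<bar> \<le> C * sqrt h" and a3: "\<bar>ux - uy\<bar> \<le> C * sqrt d"
  shows "\<bar>(ax - ay)\<^sup>2 - (ux - uy)\<^sup>2\<bar> \<le> 8 * C\<^sup>2 * sqrt h * sqrt d"
proof -
  have sq: "sqrt h \<le> sqrt d" using h by simp
  have Ch: "C * sqrt h \<le> C * sqrt d" by (rule mult_left_mono[OF sq C])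
  have p: "\<bar>(ax - ux) - (ay - uy)\<bar> \<le> 2 * C * sqrt h" using a1 a2 by linarith
  have q: "\<bar>(ax - ay) + (ux - uy)\<bar> \<le> 4 * C * sqrt d" using a1 a2 a3 Ch by linarith
  have eq: "(ax - ay)\<^sup>2 - (ux - uy)\<^sup>2 = ((ax - ux) - (ay - uy)) * ((ax - ay) + (ux - uy))"
    by (simp add: power2_eq_square algebra_simps)
  have "\<bar>(ax - ay)\<^sup>2 - (ux - uy)\<^sup>2\<bar> = \<bar>(ax - ux) - (ay - uy)\<bar> * \<bar>(ax - ay) + (ux - uy)\<bar>"
    by (simp add: eq abs_mult)
  also have "\<dots> \<le> (2 * C * sqrt h) * (4 * C * sqrt d)"
    using p q C by (intro mult_mono) auto
  also have "\<dots> = 8 * C\<^sup>2 * sqrt h * sqrt d" by (simp add: power2_eq_square)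
  finally show ?thesis .
qed

lemma dist_powr_bound:
  fixes p q s :: real
  assumes p: "p > 0" and q: "q > 0" and s: "s \<ge> 0"
  shows "sqrt (p + q) * (p + q) powr (-1 - 2 * s) \<le> p powr (-(1/4 + s)) * q powr (-(1/4 + s))"
proof -
  have pq: "p + q > 0" using p q by simp
  have ex: "1/2 + (-1 - 2 * s) = 2 * (-(1/4 + s))" by simp
  have "sqrt (p + q) * (p + q) powr (-1 - 2 * s) = (p + q) powr (1/2) * (p + q) powr (-1 - 2 * s)"
    using pq by (simp add: powr_half_sqrt)
  also have "\<dots> = (p + q) powr (1/2 + (-1 - 2 * s))"
    by (rule powr_add[symmetric])
  also have "\<dots> = ((p + q) powr 2) powr (-(1/4 + s))"
    unfolding ex by (rule powr_powr[symmetric])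
  also have "\<dots> = ((p + q)\<^sup>2) powr (-(1/4 + s))"
    using pq by (subst powr_numeral) auto
  also have "\<dots> \<le> (p * q) powr (-(1/4 + s))"
  proof (rule powr_mono2')
    show "- (1 / 4 + s) \<le> 0" using s by simp
    show "0 < p * q" using p q by simp
    have "0 \<le> p * p + p * q + q * q" using p q by (simp add: add_nonneg_nonneg)
    then show "p * q \<le> (p + q)\<^sup>2" by (simp add: power2_eq_square algebra_simps)
  qed
  also have "\<dots> = p powr (-(1/4 + s)) * q powr (-(1/4 + s))"
    using p q by (simp add: powr_mult)
  finally show ?thesis .
qed

lemma pow_split:
  fixes d M lam \<beta> :: real
  assumes d: "1 \<le> d" "d \<le> M" and lam: "lam \<ge> 0" "- \<beta> - lam \<le> -9/8"
  shows "d powr (-\<beta>) \<le> M powr lam * d powr (-9/8)"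
proof -
  have "d powr (-\<beta>) = d powr lam * d powr (-\<beta> - lam)"
    by (simp add: powr_add[symmetric])
  also have "\<dots> \<le> M powr lam * d powr (-9/8)"
  proof (rule mult_mono)
    show "d powr lam \<le> M powr lam" using d lam by (intro powr_mono2) auto
    show "d powr (- \<beta> - lam) \<le> d powr (- 9 / 8)" using d lam by (intro powr_mono) auto
  qed auto
  finally show ?thesis .
qed

lemma summ98: "summable (\<lambda>k. real (Suc k) powr (-9/8))"
proof -
  have "summable (\<lambda>k. real k powr (-9/8))" by (simp add: summable_real_powr_iff)
  then show ?thesis by (subst summable_Suc_iff)
qed

lemma half_sum:
  fixes M :: nat and h \<beta> lam :: real
  assumes h: "h > 0" and lam: "lam \<ge> 0" "- \<beta> - lam \<le> -9/8"
  shows "(\<Sum>k<M. (real (M - k) * h) powr (-\<beta>))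
          \<le> (\<Sum>k. real (Suc k) powr (-9/8)) * h powr (-\<beta>) * real M powr lam"
proof -
  have e1: "(\<Sum>k<M. (real (M - k) * h) powr (-\<beta>)) = (\<Sum>k<M. real (M - k) powr (-\<beta>)) * h powr (-\<beta>)"
    using h by (simp add: powr_mult sum_distrib_right)
  have "(\<Sum>k<M. real (M - k) powr (-\<beta>)) \<le> (\<Sum>k<M. real M powr lam * real (M - k) powr (-9/8))"
  proof (rule sum_mono)
    fix k assume "k \<in> {..<M}"
    then show "real (M - k) powr (-\<beta>) \<le> real M powr lam * real (M - k) powr (-9/8)"
      using lam by (intro pow_split) auto
  qed
  also have "\<dots> = real M powr lam * (\<Sum>k<M. real (M - k) powr (-9/8))"
    by (simp add: sum_distrib_left)
  also have "(\<Sum>k<M. real (M - k) powr (-9/8)) = (\<Sum>k<M. real (Suc (M - Suc k)) powr (-9/8))"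
    by (intro sum.cong) auto
  also have "\<dots> = (\<Sum>k<M. real (Suc k) powr (-9/8))"
    by (rule sum.nat_diff_reindex)
  finally have e2: "(\<Sum>k<M. real (M - k) powr (-\<beta>)) \<le> real M powr lam * (\<Sum>k<M. real (Suc k) powr (-9/8))" .
  have e3: "(\<Sum>k<M. real (Suc k) powr (-9/8)) \<le> (\<Sum>k. real (Suc k) powr (-9/8))"
    by (intro sum_le_suminf summ98) auto
  have "(\<Sum>k<M. real (M - k) powr (-\<beta>)) \<le> real M powr lam * (\<Sum>k. real (Suc k) powr (-9/8))"
  proof -
    have "real M powr lam * (\<Sum>k<M. real (Suc k) powr (-9/8)) \<le> real M powr lam * (\<Sum>k. real (Suc k) powr (-9/8))"
      using e3 by (rule mult_left_mono) simp
    then show ?thesis using e2 by linarith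
  qed
  then have "(\<Sum>k<M. real (M - k) powr (-\<beta>)) * h powr (-\<beta>)
     \<le> real M powr lam * (\<Sum>k. real (Suc k) powr (-9/8)) * h powr (-\<beta>)"
    by (intro mult_right_mono) auto
  then show ?thesis unfolding e1 by (simp add: algebra_simps)
qed

lemma final_lim:
  fixes s lam :: real
  assumes e: "2 * lam + 2 * s - 2 < 0"
  shows "(\<lambda>n. (1 / 2 ^ (n + 1)) * (1 / 2 ^ (n + 1)) * sqrt (1 / 2 ^ (n + 1)) *
            ((1 / 2 ^ (n + 1)) powr (-(1/4 + s)) * real (2 ^ n) powr lam)\<^sup>2 :: real) \<longlonglongrightarrow> 0"
proof -
  define E where "E = 2 * lam + 2 * s - 2"
  have eq: "(1 / 2 ^ (n + 1)) * (1 / 2 ^ (n + 1)) * sqrt (1 / 2 ^ (n + 1)) *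
            ((1 / 2 ^ (n + 1)) powr (-(1/4 + s)) * real (2 ^ n) powr lam)\<^sup>2
         = 2 powr (2 * s - 2) * (2 powr E) ^ n" for n :: nat
  proof -
    define a where "a = real n"
    have h: "1 / 2 ^ (n + 1) = (2::real) powr (-(a + 1))"
      unfolding powr_minus_divide a_def
      by (metis of_nat_Suc powr_realpow add.commute plus_1_eq_Suc zero_less_numeral)
    have m: "real (2 ^ n) = (2::real) powr a"
      unfolding a_def by (simp add: powr_realpow)
    have sq: "sqrt ((2::real) powr (-(a + 1))) = 2 powr (-(a + 1) * (1/2))"
      by (simp add: powr_half_sqrt[symmetric] powr_powr)
    have hb: "((2::real) powr (-(a + 1))) powr (-(1/4 + s)) = 2 powr (-(a + 1) * (-(1/4 + s)))"
      by (simp add: powr_powr)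
    have ml: "((2::real) powr a) powr lam = 2 powr (a * lam)"
      by (simp add: powr_powr)
    have pn: "((2::real) powr E) ^ n = 2 powr (a * E)"
      unfolding a_def by (simp add: powr_realpow[symmetric] powr_powr mult.commute)
    have "(1 / 2 ^ (n + 1)) * (1 / 2 ^ (n + 1)) * sqrt (1 / 2 ^ (n + 1)) *
            ((1 / 2 ^ (n + 1)) powr (-(1/4 + s)) * real (2 ^ n) powr lam)\<^sup>2
          = 2 powr (-(a + 1)) * 2 powr (-(a + 1)) * 2 powr (-(a + 1) * (1/2)) *
            (2 powr (-(a + 1) * (-(1/4 + s))) * 2 powr (a * lam)) * (2 powr (-(a + 1) * (-(1/4 + s))) * 2 powr (a * lam))"
      unfolding h m sq hb ml power2_eq_square by simp
    also have "\<dots> = 2 powr (-(a + 1) + -(a + 1) + -(a + 1) * (1/2) +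
            (-(a + 1) * (-(1/4 + s)) + a * lam) + (-(a + 1) * (-(1/4 + s)) + a * lam))"
      by (simp only: powr_add)
    also have "-(a + 1) + -(a + 1) + -(a + 1) * (1/2) +
            (-(a + 1) * (-(1/4 + s)) + a * lam) + (-(a + 1) * (-(1/4 + s)) + a * lam)
           = (2 * s - 2) + a * E"
      unfolding E_def by (simp add: algebra_simps)
    also have "(2::real) powr ((2 * s - 2) + a * E) = 2 powr (2 * s - 2) * (2 powr E) ^ n"
      unfolding pn by (rule powr_add)
    finally show ?thesis .
  qed
  have "(2::real) powr E < 1" using e unfolding E_def by (intro powr_less_one) auto
  then have "(\<lambda>n. ((2::real) powr E) ^ n) \<longlonglongrightarrow> 0" by (intro LIMSEQ_power_zero) simp
  then have "(\<lambda>n. (2::real) powr (2 * s - 2) * (2 powr E) ^ n) \<longlonglongrightarrow> 0"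
    by (rule tendsto_mult_right_zero)
  then show ?thesis unfolding eq .
qed

lemma ereal_shift:
  fixes A B :: "nat \<Rightarrow> real" and L :: ereal
  assumes "(\<lambda>n. ereal (A n)) \<longlonglongrightarrow> L" and "(\<lambda>n. B n - A n) \<longlonglongrightarrow> 0"
  shows "(\<lambda>n. ereal (B n)) \<longlonglongrightarrow> L"
proof -
  have "(\<lambda>n. ereal (B n - A n)) \<longlonglongrightarrow> ereal 0" using assms(2) by (rule tendsto_ereal)
  then have "(\<lambda>n. ereal (A n) + ereal (B n - A n)) \<longlonglongrightarrow> L + ereal 0"
    using assms(1) by (intro tendsto_add_ereal_general) auto
  then show ?thesis by (simp add: zero_ereal_def[symmetric])
qed

lemma ereal_equiv:
  fixes A B :: "nat \<Rightarrow> real"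
  assumes "(\<lambda>n. A n - B n) \<longlonglongrightarrow> 0"
  shows "\<forall>L :: ereal. ((\<lambda>n. ereal (A n)) \<longlonglongrightarrow> L) \<longleftrightarrow> ((\<lambda>n. ereal (B n)) \<longlonglongrightarrow> L)"
proof (intro allI iffI)
  fix L :: ereal
  have BA: "(\<lambda>n. B n - A n) \<longlonglongrightarrow> 0" using tendsto_minus[OF assms] by simp
  show "(\<lambda>n. ereal (B n)) \<longlonglongrightarrow> L" if "(\<lambda>n. ereal (A n)) \<longlonglongrightarrow> L"
    using ereal_shift[OF that BA] .
  show "(\<lambda>n. ereal (A n)) \<longlonglongrightarrow> L" if "(\<lambda>n. ereal (B n)) \<longlonglongrightarrow> L"
    using ereal_shift[OF that assms] .
qed

lemma g_sum_bound:
  fixes s :: real and n :: nat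
  assumes s: "0 < s"
  defines "lam \<equiv> max 0 (7/8 - s)"
  shows "(\<Sum>x\<in>V2 n. \<bar>x - 1/2\<bar> powr (-(1/4 + s)))
     \<le> 2 * ((\<Sum>k. real (Suc k) powr (-9/8)) * (1 / 2 ^ (n + 1)) powr (-(1/4 + s)) * real ((2::nat) ^ n) powr lam)"
proof -
  define g where "g x = \<bar>x - 1/2\<bar> powr (-(1/4 + s))" for x :: real
  define R where "R = (\<Sum>k. real (Suc k) powr (-9/8)) * (1 / 2 ^ (n + 1)) powr (-(1/4 + s)) * real ((2::nat) ^ n) powr lam"
  have lam: "lam \<ge> 0" "- (1/4 + s) - lam \<le> -9/8" unfolding lam_def by auto
  have hs: "(\<Sum>k<(2::nat)^n. (real (2 ^ n - k) * (1 / 2 ^ (n + 1))) powr (-(1/4 + s))) \<le> R"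
    unfolding R_def by (rule half_sum[OF _ lam]) simp
  have gm: "g (real k / 2 ^ (n + 1)) = (real (2 ^ n - k) * (1 / 2 ^ (n + 1))) powr (-(1/4 + s))"
    if "k < 2 ^ n" for k
  proof -
    have e: "1 / 2 - real k / 2 ^ (n + 1) = real (2 ^ n - k) * (1 / 2 ^ (n + 1))"
      using V2minus_props(2)[OF that] .
    have "0 \<le> real (2 ^ n - k) * (1 / 2 ^ (n + 1))" by simp
    then have "\<bar>real k / 2 ^ (n + 1) - 1/2\<bar> = real (2 ^ n - k) * (1 / 2 ^ (n + 1))"
      using e by linarith
    then show ?thesis unfolding g_def by simp
  qed
  have gp: "g (1 - real k / 2 ^ (n + 1)) = (real (2 ^ n - k) * (1 / 2 ^ (n + 1))) powr (-(1/4 + s))"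
    if "k < 2 ^ n" for k
  proof -
    have e: "1 / 2 - real k / 2 ^ (n + 1) = real (2 ^ n - k) * (1 / 2 ^ (n + 1))"
      using V2minus_props(2)[OF that] .
    have "0 \<le> real (2 ^ n - k) * (1 / 2 ^ (n + 1))" by simp
    then have "\<bar>1 - real k / 2 ^ (n + 1) - 1/2\<bar> = real (2 ^ n - k) * (1 / 2 ^ (n + 1))"
      using e by linarith
    then show ?thesis unfolding g_def by simp
  qed
  have sm: "sum g (V2minus n) \<le> R"
  proof -
    have "sum g (V2minus n) \<le> sum (g \<circ> (\<lambda>k. real k / 2 ^ (n + 1))) {..<2 ^ n}"
      unfolding V2minus_img by (rule sum_image_le) (auto simp: g_def)
    also have "\<dots> = (\<Sum>k<(2::nat)^n. (real (2 ^ n - k) * (1 / 2 ^ (n + 1))) powr (-(1/4 + s)))"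
      by (rule sum.cong[OF refl], unfold comp_apply, rule gm, simp)
    finally show ?thesis using hs by linarith
  qed
  have sp: "sum g (V2plus n) \<le> R"
  proof -
    have "sum g (V2plus n) \<le> sum (g \<circ> (\<lambda>k. 1 - real k / 2 ^ (n + 1))) {..<2 ^ n}"
      unfolding V2plus_img by (rule sum_image_le) (auto simp: g_def)
    also have "\<dots> = (\<Sum>k<(2::nat)^n. (real (2 ^ n - k) * (1 / 2 ^ (n + 1))) powr (-(1/4 + s)))"
      by (rule sum.cong[OF refl], unfold comp_apply, rule gp, simp)
    finally show ?thesis using hs by linarith
  qed
  have fin: "finite (V2minus n)" "finite (V2plus n)" by (simp_all add: V2minus_img V2plus_img)
  have "sum g (V2 n) = sum g (V2minus n) + sum g (V2plus n) - sum g (V2minus n \<inter> V2plus n)"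
    unfolding V2_def by (rule sum_Un[OF fin])
  moreover have "sum g (V2minus n \<inter> V2plus n) \<ge> 0" by (intro sum_nonneg) (simp add: g_def)
  ultimately have "sum g (V2 n) \<le> 2 * R" using sm sp by linarith
  then show ?thesis unfolding g_def R_def .
qed

theorem lemma4p17:
  fixes r :: "edge \<Rightarrow> real" and s :: real and u :: "real \<Rightarrow> real"
  assumes r_pos: "\<forall>e. valid_edge e \<longrightarrow> r e > 0"
    and r_par: "\<forall>i\<ge>1. r (i, 1) = r (i, 2)"
    and s: "0 < s" "s < 1"
    and ub: "upper_bound r s"
    and hu: "holder_half_01 u"
  shows "\<forall>L :: ereal.
           ((\<lambda>n. ereal (energy2 r n (avg2 n u))) \<longlonglongrightarrow> L) \<longleftrightarrow>
           ((\<lambda>n. ereal (energy2 r n u)) \<longlonglongrightarrow> L)"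
proof (rule ereal_equiv)
  obtain \<Lambda> where \<Lambda>0: "\<Lambda> > 0" and \<Lambda>: "\<And>n x y. is_wire n x y \<Longrightarrow>
       0 < j2 r n x y \<and> j2 r n x y \<le> \<Lambda> * \<bar>x - y\<bar> powr (- 1 - 2 * s)"
    using ub unfolding upper_bound_def by blast
  obtain C0 where C0: "\<forall>x\<in>{0..1}. \<forall>y\<in>{0..1}. \<bar>u x - u y\<bar> \<le> C0 * \<bar>x - y\<bar> powr (1 / 2)"
    using hu unfolding holder_half_01_def by blast
  define C where "C = \<bar>C0\<bar>"
  have C: "C \<ge> 0" unfolding C_def by simp
  have H: "\<forall>x\<in>{0..1}. \<forall>y\<in>{0..1}. \<bar>u x - u y\<bar> \<le> C * sqrt \<bar>x - y\<bar>"
  proof (intro ballI)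
    fix x y :: real assume x: "x \<in> {0..1}" and y: "y \<in> {0..1}"
    have "\<bar>u x - u y\<bar> \<le> C0 * \<bar>x - y\<bar> powr (1 / 2)" using C0 x y by blast
    also have "\<dots> = C0 * sqrt \<bar>x - y\<bar>" by (simp add: powr_half_sqrt)
    also have "\<dots> \<le> C * sqrt \<bar>x - y\<bar>" unfolding C_def by (intro mult_right_mono) auto
    finally show "\<bar>u x - u y\<bar> \<le> C * sqrt \<bar>x - y\<bar>" .
  qed
  have cont: "continuous_on {0..1} u" by (rule holder_cont[OF C H])
  have Ht: "\<bar>u t - u x\<bar> \<le> C * sqrt h"
    if "t \<in> {0..1}" "x \<in> {0..1}" "\<bar>t - x\<bar> \<le> h" for t x h
  proof -
    have "\<bar>u t - u x\<bar> \<le> C * sqrt \<bar>t - x\<bar>" using H that by blast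
    also have "\<dots> \<le> C * sqrt h" using that C by (intro mult_left_mono) auto
    finally show ?thesis .
  qed
  have avgb: "\<bar>avg2 n u x - u x\<bar> \<le> C * sqrt (1 / 2 ^ (n + 1))" if x: "x \<in> V2 n" for n x
  proof -
    define h where "h = (1::real) / 2 ^ (n + 1)"
    have hp: "h > 0" unfolding h_def by simp
    from V2_cases[OF x] have cs: "(0 \<le> x \<and> x + h \<le> 1/2 \<and> U2 n x = {x..<x+h}) \<or> (1/2 \<le> x - h \<and> x \<le> 1 \<and> U2 n x = {x-h<..x})"
      unfolding h_def .
    then show ?thesis
    proof
      assume a: "0 \<le> x \<and> x + h \<le> 1/2 \<and> U2 n x = {x..<x+h}"
      have "\<bar>integral {x..<x+h} u / measure lebesgue {x..<x+h} - u x\<bar> \<le> C * sqrt h"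
      proof (rule avg_aux)
        show "x < x + h" using hp by simp
        show "continuous_on {x..x + h} u" using a by (intro continuous_on_subset[OF cont]) auto
        show "\<bar>u t - u x\<bar> \<le> C * sqrt h" if "t \<in> {x..x + h}" for t
          using that a by (intro Ht) auto
      qed simp
      then show ?thesis using a unfolding avg2_def h_def by simp
    next
      assume a: "1/2 \<le> x - h \<and> x \<le> 1 \<and> U2 n x = {x-h<..x}"
      have "\<bar>integral {x-h<..x} u / measure lebesgue {x-h<..x} - u x\<bar> \<le> C * sqrt h"
      proof (rule avg_aux)
        show "x - h < x" using hp by simp
        show "continuous_on {x - h..x} u" using a by (intro continuous_on_subset[OF cont]) auto
        show "\<bar>u t - u x\<bar> \<le> C * sqrt h" if "t \<in> {x - h..x}" for t
          using that a by (intro Ht) auto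
      qed simp
      then show ?thesis using a unfolding avg2_def h_def by simp
    qed
  qed
  define Z where "Z = (\<Sum>k. real (Suc k) powr (-9/8))"
  define lam where "lam = max 0 (7/8 - s)"
  define \<beta> where "\<beta> = 1/4 + s"
  define bnd where "bnd n = (32 * C\<^sup>2 * \<Lambda> * Z\<^sup>2) * ((1 / 2 ^ (n + 1)) * (1 / 2 ^ (n + 1)) * sqrt (1 / 2 ^ (n + 1)) *
            ((1 / 2 ^ (n + 1)) powr (-(1/4 + s)) * real ((2::nat) ^ n) powr lam)\<^sup>2)" for n :: nat
  have Z0: "Z \<ge> 0" unfolding Z_def by (intro suminf_nonneg summ98) auto
  have bnd0: "bnd \<longlonglongrightarrow> 0"
  proof -
    have "2 * lam + 2 * s - 2 < 0" unfolding lam_def using s by (auto simp: max_def)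
    from final_lim[OF this] show ?thesis unfolding bnd_def by (rule tendsto_mult_right_zero)
  qed
  have main: "norm (energy2 r n (avg2 n u) - energy2 r n u) \<le> bnd n" for n
  proof -
    define h where "h = (1::real) / 2 ^ (n + 1)"
    have hp: "h > 0" unfolding h_def by simp
    define A where "A = avg2 n u"
    define g where "g x = \<bar>x - 1/2\<bar> powr (-\<beta>)" for x :: real
    define K where "K = 8 * C\<^sup>2 * \<Lambda> * h * h * sqrt h"
    have K0: "K \<ge> 0" unfolding K_def using \<Lambda>0 hp by simp
    define T where "T x y = ((A x - A y)\<^sup>2 - (u x - u y)\<^sup>2) * j2 r n x y * h * h" for x y
    have Dsum: "energy2 r n A - energy2 r n u = (\<Sum>x\<in>V2 n. \<Sum>y\<in>V2 n. T x y)"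
      unfolding energy2_def T_def mu2_def h_def by (simp add: sum_subtractf[symmetric] left_diff_distrib diff_divide_distrib)
    have Tb: "\<bar>T x y\<bar> \<le> K * (g x * g y)" if x: "x \<in> V2 n" and y: "y \<in> V2 n" for x y
    proof (cases "is_wire n x y")
      case False
      then have "T x y = 0" unfolding T_def j2_def by simp
      moreover have "K * (g x * g y) \<ge> 0" using K0 unfolding g_def by simp
      ultimately show ?thesis by simp
    next
      case True
      from \<Lambda>[OF True] have j0: "0 < j2 r n x y" and jb: "j2 r n x y \<le> \<Lambda> * \<bar>x - y\<bar> powr (- 1 - 2 * s)" by auto
      have cx: "(0 \<le> x \<and> x + h \<le> 1/2) \<or> (1/2 \<le> x - h \<and> x \<le> 1)"
        using V2_cases[OF x] unfolding h_def by blast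
      have cy: "(0 \<le> y \<and> y + h \<le> 1/2) \<or> (1/2 \<le> y - h \<and> y \<le> 1)"
        using V2_cases[OF y] unfolding h_def by blast
      define p where "p = \<bar>x - 1/2\<bar>"
      define q where "q = \<bar>y - 1/2\<bar>"
      define d where "d = \<bar>x - y\<bar>"
      have ph: "p \<ge> h" using cx unfolding p_def by auto
      have qh: "q \<ge> h" using cy unfolding q_def by auto
      have dpq: "d = p + q" using wire_halves[OF True] unfolding d_def p_def q_def by auto
      have x01: "x \<in> {0..1}" and y01: "y \<in> {0..1}" using cx cy hp by auto
      have hd: "h \<le> d" using dpq ph qh hp by linarith
      have sqb: "\<bar>(A x - A y)\<^sup>2 - (u x - u y)\<^sup>2\<bar> \<le> 8 * C\<^sup>2 * sqrt h * sqrt d"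
      proof (rule sq_diff_bound[OF C])
        show "0 \<le> h" using hp by simp
        show "h \<le> d" by (rule hd)
        show "\<bar>A x - u x\<bar> \<le> C * sqrt h" unfolding A_def h_def by (rule avgb[OF x])
        show "\<bar>A y - u y\<bar> \<le> C * sqrt h" unfolding A_def h_def by (rule avgb[OF y])
        show "\<bar>u x - u y\<bar> \<le> C * sqrt d" unfolding d_def using H x01 y01 by blast
      qed
      have "\<bar>T x y\<bar> = \<bar>(A x - A y)\<^sup>2 - (u x - u y)\<^sup>2\<bar> * j2 r n x y * (h * h)"
        unfolding T_def using j0 hp by (simp add: abs_mult)
      also have "\<dots> \<le> (8 * C\<^sup>2 * sqrt h * sqrt d) * (\<Lambda> * d powr (- 1 - 2 * s)) * (h * h)"
        using sqb jb j0 hp unfolding d_def by (intro mult_right_mono mult_mono) auto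
      also have "\<dots> = K * (sqrt (p + q) * (p + q) powr (- 1 - 2 * s))"
        unfolding K_def dpq by (simp add: algebra_simps)
      also have "\<dots> \<le> K * (g x * g y)"
      proof (rule mult_left_mono[OF _ K0])
        show "sqrt (p + q) * (p + q) powr (- 1 - 2 * s) \<le> g x * g y"
          unfolding g_def \<beta>_def p_def[symmetric] q_def[symmetric]
          using ph qh hp s by (intro dist_powr_bound) auto
      qed
      finally show ?thesis .
    qed
    have g0: "g x \<ge> 0" for x unfolding g_def by simp
    have "\<bar>energy2 r n A - energy2 r n u\<bar> \<le> (\<Sum>x\<in>V2 n. \<Sum>y\<in>V2 n. \<bar>T x y\<bar>)"
      unfolding Dsum by (rule order_trans[OF sum_abs sum_mono]) (rule sum_abs)
    also have "\<dots> \<le> (\<Sum>x\<in>V2 n. \<Sum>y\<in>V2 n. K * (g x * g y))"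
      by (intro sum_mono Tb)
    also have "\<dots> = K * (\<Sum>x\<in>V2 n. \<Sum>y\<in>V2 n. g x * g y)"
      by (simp add: sum_distrib_left)
    also have "\<dots> = K * (sum g (V2 n))\<^sup>2"
      by (simp only: power2_eq_square sum_product)
    also have "\<dots> \<le> K * (2 * (Z * h powr (-\<beta>) * real ((2::nat) ^ n) powr lam))\<^sup>2"
    proof (rule mult_left_mono[OF _ K0], rule power_mono)
      show "0 \<le> sum g (V2 n)" using g0 by (simp add: sum_nonneg)
      show "sum g (V2 n) \<le> 2 * (Z * h powr (-\<beta>) * real ((2::nat) ^ n) powr lam)"
        unfolding g_def \<beta>_def Z_def h_def lam_def using g_sum_bound[OF s(1)] by simp
    qed
    also have "\<dots> = bnd n"
    proof -
      have e: "bnd n = (32 * C\<^sup>2 * \<Lambda> * Z\<^sup>2) * (h * h * sqrt h * (h powr (-\<beta>) * real ((2::nat) ^ n) powr lam)\<^sup>2)"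
        unfolding bnd_def h_def \<beta>_def by (rule refl)
      have gen: "(8 * C\<^sup>2 * L * h * h * sqrt h) * (2 * (Z * X * Y))\<^sup>2 = (32 * C\<^sup>2 * L * Z\<^sup>2) * (h * h * sqrt h * (X * Y)\<^sup>2)" for L X Y :: real
        by algebra
      show ?thesis unfolding e K_def by (rule gen)
    qed
    finally have "\<bar>energy2 r n A - energy2 r n u\<bar> \<le> bnd n" .
    then show ?thesis unfolding A_def real_norm_def .
  qed
  show "(\<lambda>n. energy2 r n (avg2 n u) - energy2 r n u) \<longlonglongrightarrow> 0"
  proof (rule Lim_null_comparison[OF _ bnd0])
    show "\<forall>\<^sub>F n in sequentially. norm (energy2 r n (avg2 n u) - energy2 r n u) \<le> bnd n"
      using main by (intro always_eventually allI)
  qed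
qed

end
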